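(* The GP 2 program is-connected terminates on any GP 2 host graph in which every node is marked grey and is not a root and every edge is unmarked.
   Context: GP 2 semantics. Host graphs are finite directed graphs (parallel edges and loops allowed) whose nodes and edges carry labels (lists of integers and strings) and marks (nodes: unmarked, red, green, blue, grey; edges: unmarked, red, green, blue, dashed); some nodes are roots. A rule is applied by finding an injective label- and mark-compatible match of its left-hand side (mark "any" matches every mark; roots match roots) satisfying the dangling condition, then changing the matched items as prescribed by the right-hand side. Commands: a rule set call applies one applicable rule, failing if none applies; $P;Q$ sequencing; $P!$ iterates $P$ until it fails (break exits the loop); "try $C$ then $P$ else $Q$" runs $C$ and continues with $P$ on its result if it succeeded, else runs $Q$ on the original graph; "if $C$ then $P$ else $Q$" runs $C$ on a copy then $P$ or $Q$ on the original; fail causes failure. The program is-connected (labels unchanged by all rules): Main = try init then (DFS!; Check); DFS = FORWARD!; try back else break; FORWARD = next_edge; {move, ignore}; Check = if match then fail. Rule edges between nodes 1 and 2 match host edges in either direction. - init: a grey non-root node becomes a blue root. - match: a grey node; no change. - next_edge: blue root 1, node 2 of any mark, unmarked edge between them; edge becomes red. - ignore: blue root 1, blue node 2, red edge between; edge becomes blue. - move: blue root 1, grey node 2, red edge between; node 1 becomes a blue non-root, node 2 a blue root, edge dashed. - back: blue non-root 1, blue root 2, dashed edge between; node 1 becomes a root, node 2 a non-root (both blue), edge blue. *)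

theory Defs
  imports Main
begin

datatype atom = AInt int | AStr string

datatype nmark = NUnmarked | NRed | NGreen | NBlue | NGrey
datatype emark = EUnmarked | ERed | EGreen | EBlue | EDashed

record ('v, 'e) hgraph =
  nodes :: "'v set"
  edges :: "'e set"
  src   :: "'e \<Rightarrow> 'v"
  tgt   :: "'e \<Rightarrow> 'v"
  nlab  :: "'v \<Rightarrow> atom list"
  elab  :: "'e \<Rightarrow> atom list"
  nmark :: "'v \<Rightarrow> nmark"
  emark :: "'e \<Rightarrow> emark"
  root  :: "'v \<Rightarrow> bool"

definition wf_graph :: "('v, 'e) hgraph \<Rightarrow> bool" where
  "wf_graph G \<longleftrightarrow> finite (nodes G) \<and> finite (edges G) \<and>
     (\<forall>e\<in>edges G. src G e \<in> nodes G \<and> tgt G e \<in> nodes G)"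

text \<open>A rule edge between rule nodes 1 and 2 matches a host edge in either direction.\<close>
definition between :: "('v, 'e) hgraph \<Rightarrow> 'e \<Rightarrow> 'v \<Rightarrow> 'v \<Rightarrow> bool" where
  "between G e a b \<longleftrightarrow> e \<in> edges G \<and>
     ((src G e = a \<and> tgt G e = b) \<or> (src G e = b \<and> tgt G e = a))"

text \<open>GP 2 conventions: a root node of the left-hand side matches only host roots, a non-root
  left-hand-side node matches root and non-root host nodes; matches are injective, so nodes 1
  and 2 are distinct. No rule deletes anything, so the dangling condition holds trivially.\<close>

definition r_init :: "('v, 'e) hgraph \<Rightarrow> ('v, 'e) hgraph \<Rightarrow> bool" where
  "r_init G H \<longleftrightarrow> (\<exists>v\<in>nodes G. nmark G v = NGrey \<and>
     H = G\<lparr>nmark := (nmark G)(v := NBlue), root := (root G)(v := True)\<rparr>)"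

definition r_match :: "('v, 'e) hgraph \<Rightarrow> ('v, 'e) hgraph \<Rightarrow> bool" where
  "r_match G H \<longleftrightarrow> (\<exists>v\<in>nodes G. nmark G v = NGrey) \<and> H = G"

definition r_next_edge :: "('v, 'e) hgraph \<Rightarrow> ('v, 'e) hgraph \<Rightarrow> bool" where
  "r_next_edge G H \<longleftrightarrow> (\<exists>a b e. a \<in> nodes G \<and> b \<in> nodes G \<and> a \<noteq> b \<and> between G e a b \<and>
     nmark G a = NBlue \<and> root G a \<and> emark G e = EUnmarked \<and>
     H = G\<lparr>emark := (emark G)(e := ERed)\<rparr>)"

definition r_ignore :: "('v, 'e) hgraph \<Rightarrow> ('v, 'e) hgraph \<Rightarrow> bool" where
  "r_ignore G H \<longleftrightarrow> (\<exists>a b e. a \<in> nodes G \<and> b \<in> nodes G \<and> a \<noteq> b \<and> between G e a b \<and>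
     nmark G a = NBlue \<and> root G a \<and> nmark G b = NBlue \<and> emark G e = ERed \<and>
     H = G\<lparr>emark := (emark G)(e := EBlue)\<rparr>)"

definition r_move :: "('v, 'e) hgraph \<Rightarrow> ('v, 'e) hgraph \<Rightarrow> bool" where
  "r_move G H \<longleftrightarrow> (\<exists>a b e. a \<in> nodes G \<and> b \<in> nodes G \<and> a \<noteq> b \<and> between G e a b \<and>
     nmark G a = NBlue \<and> root G a \<and> nmark G b = NGrey \<and> emark G e = ERed \<and>
     H = G\<lparr>nmark := (nmark G)(a := NBlue, b := NBlue),
            root := (root G)(a := False, b := True),
            emark := (emark G)(e := EDashed)\<rparr>)"

definition r_back :: "('v, 'e) hgraph \<Rightarrow> ('v, 'e) hgraph \<Rightarrow> bool" where
  "r_back G H \<longleftrightarrow> (\<exists>a b e. a \<in> nodes G \<and> b \<in> nodes G \<and> a \<noteq> b \<and> between G e a b \<and>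
     nmark G a = NBlue \<and> nmark G b = NBlue \<and> root G b \<and> emark G e = EDashed \<and>
     H = G\<lparr>nmark := (nmark G)(a := NBlue, b := NBlue),
            root := (root G)(a := True, b := False),
            emark := (emark G)(e := EBlue)\<rparr>)"

datatype 'g cmd =
    Call "('g \<Rightarrow> 'g \<Rightarrow> bool) list"
  | Seq "'g cmd" "'g cmd"
  | Loop "'g cmd"
  | Try "'g cmd" "'g cmd" "'g cmd"
  | If "'g cmd" "'g cmd" "'g cmd"
  | Skip | Break | Fail

datatype 'g result = Ok 'g | Failed | Brk 'g

inductive exec :: "'g cmd \<Rightarrow> 'g \<Rightarrow> 'g result \<Rightarrow> bool" where
  call_ok:   "r \<in> set rs \<Longrightarrow> r G H \<Longrightarrow> exec (Call rs) G (Ok H)"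
| call_fail: "(\<forall>r\<in>set rs. \<forall>H. \<not> r G H) \<Longrightarrow> exec (Call rs) G Failed"
| seq_ok:    "exec P G (Ok H) \<Longrightarrow> exec Q H r \<Longrightarrow> exec (Seq P Q) G r"
| seq_fail:  "exec P G Failed \<Longrightarrow> exec (Seq P Q) G Failed"
| seq_brk:   "exec P G (Brk H) \<Longrightarrow> exec (Seq P Q) G (Brk H)"
| loop_ok:   "exec P G (Ok H) \<Longrightarrow> exec (Loop P) H r \<Longrightarrow> exec (Loop P) G r"
| loop_fail: "exec P G Failed \<Longrightarrow> exec (Loop P) G (Ok G)"
| loop_brk:  "exec P G (Brk H) \<Longrightarrow> exec (Loop P) G (Ok H)"
| try_ok:    "exec C G (Ok H) \<Longrightarrow> exec P H r \<Longrightarrow> exec (Try C P Q) G r"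
| try_fail:  "exec C G Failed \<Longrightarrow> exec Q G r \<Longrightarrow> exec (Try C P Q) G r"
| try_brk:   "exec C G (Brk H) \<Longrightarrow> exec (Try C P Q) G (Brk H)"
| if_ok:     "exec C G (Ok H) \<Longrightarrow> exec P G r \<Longrightarrow> exec (If C P Q) G r"
| if_fail:   "exec C G Failed \<Longrightarrow> exec Q G r \<Longrightarrow> exec (If C P Q) G r"
| if_brk:    "exec C G (Brk H) \<Longrightarrow> exec (If C P Q) G (Brk H)"
| skip:      "exec Skip G (Ok G)"
| break:     "exec Break G (Brk G)"
| fail:      "exec Fail G Failed"

text \<open>A program can diverge from G if some execution from G is infinite
  (coinductively: some loop is iterated forever along some execution).\<close>
coinductive diverges :: "'g cmd \<Rightarrow> 'g \<Rightarrow> bool" where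
  "diverges P G \<Longrightarrow> diverges (Seq P Q) G"
| "exec P G (Ok H) \<Longrightarrow> diverges Q H \<Longrightarrow> diverges (Seq P Q) G"
| "diverges P G \<Longrightarrow> diverges (Loop P) G"
| "exec P G (Ok H) \<Longrightarrow> diverges (Loop P) H \<Longrightarrow> diverges (Loop P) G"
| "diverges C G \<Longrightarrow> diverges (Try C P Q) G"
| "exec C G (Ok H) \<Longrightarrow> diverges P H \<Longrightarrow> diverges (Try C P Q) G"
| "exec C G Failed \<Longrightarrow> diverges Q G \<Longrightarrow> diverges (Try C P Q) G"
| "diverges C G \<Longrightarrow> diverges (If C P Q) G"
| "exec C G (Ok H) \<Longrightarrow> diverges P G \<Longrightarrow> diverges (If C P Q) G"
| "exec C G Failed \<Longrightarrow> diverges Q G \<Longrightarrow> diverges (If C P Q) G"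

definition terminates :: "'g cmd \<Rightarrow> 'g \<Rightarrow> bool" where
  "terminates P G \<longleftrightarrow> \<not> diverges P G"

definition FORWARD :: "('v, 'e) hgraph cmd" where
  "FORWARD = Seq (Call [r_next_edge]) (Call [r_move, r_ignore])"

definition DFS :: "('v, 'e) hgraph cmd" where
  "DFS = Seq (Loop FORWARD) (Try (Call [r_back]) Skip Break)"

definition Check :: "('v, 'e) hgraph cmd" where
  "Check = If (Call [r_match]) Fail Skip"

definition is_connected :: "('v, 'e) hgraph cmd" where
  "is_connected = Try (Call [r_init]) (Seq (Loop DFS) Check) Skip"

end

theory Submission
  imports Defs
begin

fun w :: "emark \<Rightarrow> nat" where
  "w EUnmarked = 3" | "w ERed = 2" | "w EDashed = 1" | "w _ = 0"

definition msr :: "('v, 'e) hgraph \<Rightarrow> nat" where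
  "msr G = (\<Sum>e\<in>edges G. w (emark G e))"

definition good :: "(('v, 'e) hgraph \<Rightarrow> ('v, 'e) hgraph \<Rightarrow> bool) \<Rightarrow> bool" where
  "good R \<longleftrightarrow> (\<forall>G H. finite (edges G) \<longrightarrow> R G H \<longrightarrow> edges H = edges G \<and> msr H \<le> msr G)"

definition sgood :: "(('v, 'e) hgraph \<Rightarrow> ('v, 'e) hgraph \<Rightarrow> bool) \<Rightarrow> bool" where
  "sgood R \<longleftrightarrow> (\<forall>G H. finite (edges G) \<longrightarrow> R G H \<longrightarrow> edges H = edges G \<and> msr H < msr G)"

lemma upd_lt:
  assumes "finite (edges G)" "e \<in> edges G" "w m' < w (emark G e)"
  shows "(\<Sum>x\<in>edges G. w (((emark G)(e := m')) x)) < msr G"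
  unfolding msr_def
  by (rule sum_strict_mono_ex1) (use assms in auto)


lemma s_next: "sgood r_next_edge"
  unfolding sgood_def r_next_edge_def between_def
  using upd_lt by (fastforce simp: msr_def)

lemma s_ignore: "sgood r_ignore"
  unfolding sgood_def r_ignore_def between_def
  using upd_lt by (fastforce simp: msr_def)

lemma s_move: "sgood r_move"
  unfolding sgood_def r_move_def between_def
  using upd_lt by (fastforce simp: msr_def)

lemma s_back: "sgood r_back"
  unfolding sgood_def r_back_def between_def
  using upd_lt by (fastforce simp: msr_def)

lemma g_init: "good r_init"
  unfolding good_def r_init_def by (auto simp: msr_def)

lemma g_match: "good r_match"
  unfolding good_def r_match_def by auto

lemma sg_g: "sgood R \<Longrightarrow> good R"
  unfolding sgood_def good_def by fastforce

fun rls :: "'g cmd \<Rightarrow> ('g \<Rightarrow> 'g \<Rightarrow> bool) set" where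
  "rls (Call rs) = set rs"
| "rls (Seq P Q) = rls P \<union> rls Q"
| "rls (Loop P) = rls P"
| "rls (Try C P Q) = rls C \<union> rls P \<union> rls Q"
| "rls (If C P Q) = rls C \<union> rls P \<union> rls Q"
| "rls _ = {}"

fun lf :: "'g cmd \<Rightarrow> bool" where
  "lf (Call rs) = True"
| "lf (Seq P Q) = (lf P \<and> lf Q)"
| "lf (Loop P) = False"
| "lf (Try C P Q) = (lf C \<and> lf P \<and> lf Q)"
| "lf (If C P Q) = (lf C \<and> lf P \<and> lf Q)"
| "lf _ = True"

lemma lf_nodiv: "lf P \<Longrightarrow> \<not> diverges P G"
proof (induction P arbitrary: G)
  case (Call x) then show ?case by (auto elim: diverges.cases)
next
  case (Seq P1 P2) then show ?case by (auto elim: diverges.cases)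
next
  case (Loop P) then show ?case by simp
next
  case (Try P1 P2 P3) then show ?case by (auto elim: diverges.cases)
next
  case (If P1 P2 P3) then show ?case by (auto elim: diverges.cases)
qed (auto elim: diverges.cases)

fun okle :: "('v, 'e) hgraph \<Rightarrow> ('v, 'e) hgraph result \<Rightarrow> bool" where
  "okle G (Ok H) = (edges H = edges G \<and> msr H \<le> msr G)"
| "okle G (Brk H) = (edges H = edges G \<and> msr H \<le> msr G)"
| "okle G Failed = True"

lemma exec_mono0:
  "exec P G r \<Longrightarrow> \<forall>R\<in>rls P. good R \<Longrightarrow> finite (edges G) \<Longrightarrow> okle G r"
proof (induction P G r rule: exec.induct)
  case (call_ok r rs G H)
  then show ?case unfolding good_def by auto
next
  case (seq_ok P G H Q r)
  then show ?case by (cases r) (auto intro: le_trans)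
next
  case (loop_ok P G H r)
  then show ?case by (cases r) (auto intro: le_trans)
next
  case (try_ok C G H P r Q)
  then show ?case by (cases r) (auto intro: le_trans)
next
  case (try_fail C G Q r P)
  then show ?case by auto
next
  case (if_ok C G H P r Q)
  then show ?case by auto
next
  case (if_fail C G Q r P)
  then show ?case by auto
qed auto

lemma exec_mono:
  "exec P G (Ok H) \<Longrightarrow> \<forall>R\<in>rls P. good R \<Longrightarrow> finite (edges G)
   \<Longrightarrow> edges H = edges G \<and> msr H \<le> msr G"
  using exec_mono0 by fastforce

lemma loop_nodiv:
  fixes P :: "('v, 'e) hgraph cmd"
  assumes "\<forall>G. finite (edges G) \<longrightarrow> \<not> diverges P G"
    and "\<forall>G H. finite (edges G) \<longrightarrow> exec P G (Ok H) \<longrightarrow> edges H = edges G \<and> msr H < msr G"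
  shows "finite (edges G) \<Longrightarrow> \<not> diverges (Loop P) G"
proof (induction "msr G" arbitrary: G rule: less_induct)
  case less
  show ?case
  proof
    assume "diverges (Loop P) G"
    then show False
    proof (cases rule: diverges.cases)
      case 3 then show ?thesis using assms less by auto
    next
      case (4 H)
      then show ?thesis using assms less by metis
    qed
  qed
qed

lemma fwd_a: "\<forall>G::('v,'e) hgraph. finite (edges G) \<longrightarrow> \<not> diverges FORWARD G"
  by (simp add: lf_nodiv FORWARD_def)

lemma fwd_b: "\<forall>G H::('v,'e) hgraph. finite (edges G) \<longrightarrow> exec FORWARD G (Ok H) \<longrightarrow> edges H = edges G \<and> msr H < msr G"
proof (intro allI impI)
    fix G H :: "('v,'e) hgraph"
    assume f: "finite (edges G)" and "exec FORWARD G (Ok H)"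
    then obtain K where k1: "exec (Call [r_next_edge]) G (Ok K)" and k2: "exec (Call [r_move, r_ignore]) K (Ok H)"
      unfolding FORWARD_def by (auto elim: exec.cases)
    from k1 have "r_next_edge G K" by (auto elim: exec.cases)
    with s_next f have a: "edges K = edges G \<and> msr K < msr G" unfolding sgood_def by blast
    from k2 have "r_move K H \<or> r_ignore K H" by (auto elim: exec.cases)
    with s_move s_ignore f a have "edges H = edges K \<and> msr H < msr K" unfolding sgood_def by metis
    with a show "edges H = edges G \<and> msr H < msr G" by simp
qed

lemma fwd_nodiv:
  fixes G :: "('v,'e) hgraph"
  shows "finite (edges G) \<Longrightarrow> \<not> diverges (Loop FORWARD) G"
  using loop_nodiv[OF fwd_a fwd_b] by blast

lemma dfs_a: "\<forall>G::('v,'e) hgraph. finite (edges G) \<longrightarrow> \<not> diverges DFS G"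
  proof (intro allI impI notI)
    fix G :: "('v,'e) hgraph"
    assume f: "finite (edges G)" and "diverges DFS G"
    then have "diverges (Seq (Loop FORWARD) (Try (Call [r_back]) Skip Break)) G" by (simp add: DFS_def)
    then show False
    proof (cases rule: diverges.cases)
      case 1 then show ?thesis using fwd_nodiv f by blast
    next
      case (2 H) then show ?thesis using lf_nodiv[of "Try (Call [r_back]) Skip Break"] by force
    qed
  qed

lemma dfs_b: "\<forall>G H::('v,'e) hgraph. finite (edges G) \<longrightarrow> exec DFS G (Ok H) \<longrightarrow> edges H = edges G \<and> msr H < msr G"
  proof (intro allI impI)
    fix G H :: "('v,'e) hgraph"
    assume f: "finite (edges G)" and "exec DFS G (Ok H)"
    then obtain K where k1: "exec (Loop FORWARD) G (Ok K)" and k2: "exec (Try (Call [r_back]) Skip Break) K (Ok H)"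
      unfolding DFS_def by (auto elim: exec.cases)
    have gd: "\<forall>R\<in>rls (Loop (FORWARD :: ('v,'e) hgraph cmd)). good R"
      using sg_g s_next s_move s_ignore by (auto simp: FORWARD_def)
    have a: "edges K = edges G \<and> msr K \<le> msr G" using exec_mono[OF k1 gd f] by simp
    from k2 have "r_back K H"
      by (auto elim!: exec.cases[of "Try _ _ _"] exec.cases[of "Call _"] exec.cases[of Skip] exec.cases[of Break])
    with s_back f a have "edges H = edges K \<and> msr H < msr K" unfolding sgood_def by metis
    with a show "edges H = edges G \<and> msr H < msr G" by simp
  qed

lemma dfs_nodiv:
  fixes G :: "('v,'e) hgraph"
  shows "finite (edges G) \<Longrightarrow> \<not> diverges (Loop DFS) G"
  using loop_nodiv[OF dfs_a dfs_b] by blast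

theorem mainTheorem3:
  fixes G :: "('v, 'e) hgraph"
  assumes "wf_graph G"
    and "\<forall>v\<in>nodes G. nmark G v = NGrey \<and> \<not> root G v"
    and "\<forall>e\<in>edges G. emark G e = EUnmarked"
  shows "terminates (is_connected :: ('v, 'e) hgraph cmd) G"
proof -
  have f: "finite (edges G)" using assms(1) by (simp add: wf_graph_def)
  show ?thesis unfolding terminates_def is_connected_def
  proof
    assume "diverges (Try (Call [r_init]) (Seq (Loop DFS) Check) Skip) G"
    then show False
    proof (cases rule: diverges.cases)
      case 5 then show ?thesis using lf_nodiv[of "Call [r_init]" G] by force
    next
      case (6 H)
      then have "r_init G H" by (auto elim: exec.cases)
      with g_init f have fh: "finite (edges H)" unfolding good_def by metis
      from 6(2) show ?thesis
      proof (cases rule: diverges.cases)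
        case 1 then show ?thesis using dfs_nodiv fh by blast
      next
        case (2 K)
        then show ?thesis using lf_nodiv[of "Check"] by (force simp: Check_def)
      qed
    next
      case 7 then show ?thesis using lf_nodiv[of "Skip"] by force
    qed
  qed
qed

end
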